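(* If $b$ is a super-core of a length-preserving function $f:\{0,1\}^n\to\{0,1\}^n$ computable by polynomial-size circuits, then $g(x):=f(x)b(x)$ (concatenation, $g:\{0,1\}^n\to\{0,1\}^{n+1}$) is a super-bit.
   Context: A predicate $b$ computable by polynomial-size circuits is a super-core of $f:\{0,1\}^n\to\{0,1\}^{m(n)}$ if there do not exist a nondeterministic polynomial-size circuit family $\mathcal{A}_1$ (accepting iff some witness gives output 1), a co-nondeterministic polynomial-size circuit family $\mathcal{A}_2$ (rejecting iff some witness gives output 0), a polynomial $p$ and infinitely many $n$ such that either $\Pr_{x\in\{0,1\}^n}[\mathcal{A}_1(f(x),1^n)=b(x)=0]+\tfrac12\Pr_{y\in\{0,1\}^{m(n)}}[\mathcal{A}_1(y,1^n)=1]\ge \tfrac12+\tfrac1{p(n)}$ or $\Pr_{x}[\mathcal{A}_2(f(x),1^n)=b(x)=1]+\tfrac12\Pr_{y}[\mathcal{A}_2(y,1^n)=0]\ge \tfrac12+\tfrac1{p(n)}$. A generator $g:\{0,1\}^n\to\{0,1\}^{n+1}$ computable by polynomial-size circuits is a super-bit if for every nondeterministic polynomial-size circuit family $D$, every polynomial $p$ and all sufficiently large $n$, $\Pr[D(U_{n+1})=1]-\Pr[D(g(U_n))=1]<1/p(n)$, where $U_k$ is uniform on $\{0,1\}^k$. *)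

theory Defs
  imports "HOL-Computational_Algebra.Polynomial"
begin

text \<open>A circuit on an input of length k: wires 0..k-1 carry the input bits, the i-th gate
  defines wire k+i and may only refer to earlier wires (references to non-existing wires
  read False).\<close>

datatype gate = GConst bool | GNot nat | GAnd nat nat | GOr nat nat

type_synonym circuit = "gate list \<times> nat list"

definition wire :: "bool list \<Rightarrow> nat \<Rightarrow> bool" where
  "wire ws i = (if i < length ws then ws ! i else False)"

fun gate_val :: "bool list \<Rightarrow> gate \<Rightarrow> bool" where
  "gate_val ws (GConst c) = c"
| "gate_val ws (GNot i) = (\<not> wire ws i)"
| "gate_val ws (GAnd i j) = (wire ws i \<and> wire ws j)"
| "gate_val ws (GOr i j) = (wire ws i \<or> wire ws j)"

fun eval_wires :: "bool list \<Rightarrow> gate list \<Rightarrow> bool list" where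
  "eval_wires ws [] = ws"
| "eval_wires ws (g # gs) = eval_wires (ws @ [gate_val ws g]) gs"

definition circ_eval :: "circuit \<Rightarrow> bool list \<Rightarrow> bool list" where
  "circ_eval C xs = map (wire (eval_wires xs (fst C))) (snd C)"

definition circ_size :: "circuit \<Rightarrow> nat" where
  "circ_size C = length (fst C) + length (snd C)"

definition out1 :: "circuit \<Rightarrow> bool list \<Rightarrow> bool" where
  "out1 C xs = (case circ_eval C xs of [v] \<Rightarrow> v | _ \<Rightarrow> False)"

definition poly_bounded :: "(nat \<Rightarrow> nat) \<Rightarrow> bool" where
  "poly_bounded s \<longleftrightarrow> (\<exists>q :: nat poly. \<forall>n. s n \<le> poly q n)"

text \<open>Computable by a (non-uniform) family of polynomial-size circuits, indexed by input length.\<close>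
definition poly_computable :: "(bool list \<Rightarrow> bool list) \<Rightarrow> bool" where
  "poly_computable f \<longleftrightarrow>
     (\<exists>C :: nat \<Rightarrow> circuit. poly_bounded (\<lambda>n. circ_size (C n)) \<and>
        (\<forall>x. circ_eval (C (length x)) x = f x))"

definition poly_computable_pred :: "(bool list \<Rightarrow> bool) \<Rightarrow> bool" where
  "poly_computable_pred b \<longleftrightarrow> poly_computable (\<lambda>x. [b x])"

text \<open>A (co-)nondeterministic circuit is a circuit together with a witness length k;
  it is run on input y @ w for witnesses w of length k.\<close>
type_synonym ndcircuit = "circuit \<times> nat"

definition nd_size :: "ndcircuit \<Rightarrow> nat" where
  "nd_size A = circ_size (fst A) + snd A"

definition nd_accepts :: "ndcircuit \<Rightarrow> bool list \<Rightarrow> bool" where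
  "nd_accepts A y \<longleftrightarrow> (\<exists>w. length w = snd A \<and> out1 (fst A) (y @ w))"

definition cond_accepts :: "ndcircuit \<Rightarrow> bool list \<Rightarrow> bool" where
  "cond_accepts A y \<longleftrightarrow> \<not> (\<exists>w. length w = snd A \<and> \<not> out1 (fst A) (y @ w))"

definition prob :: "nat \<Rightarrow> (bool list \<Rightarrow> bool) \<Rightarrow> real" where
  "prob n P = real (card {x :: bool list. length x = n \<and> P x}) / 2 ^ n"

text \<open>f maps {0,1}^n to {0,1}^(m n). Polynomials p in the advantage bounds are nonzero
  polynomials with natural coefficients (so eventually positive).\<close>
definition super_core :: "(nat \<Rightarrow> nat) \<Rightarrow> (bool list \<Rightarrow> bool list) \<Rightarrow> (bool list \<Rightarrow> bool) \<Rightarrow> bool" where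
  "super_core m f b \<longleftrightarrow> poly_computable_pred b \<and>
     \<not> (\<exists>(A1 :: nat \<Rightarrow> ndcircuit) (A2 :: nat \<Rightarrow> ndcircuit) (p :: nat poly).
          poly_bounded (\<lambda>n. nd_size (A1 n)) \<and> poly_bounded (\<lambda>n. nd_size (A2 n)) \<and> p \<noteq> 0 \<and>
          infinite {n.
            prob n (\<lambda>x. \<not> nd_accepts (A1 n) (f x) \<and> \<not> b x)
              + 1/2 * prob (m n) (\<lambda>y. nd_accepts (A1 n) y) \<ge> 1/2 + 1 / real (poly p n)
          \<or> prob n (\<lambda>x. cond_accepts (A2 n) (f x) \<and> b x)
              + 1/2 * prob (m n) (\<lambda>y. \<not> cond_accepts (A2 n) y) \<ge> 1/2 + 1 / real (poly p n)})"

definition super_bit :: "(bool list \<Rightarrow> bool list) \<Rightarrow> bool" where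
  "super_bit g \<longleftrightarrow> poly_computable g \<and>
     (\<forall>D :: nat \<Rightarrow> ndcircuit. poly_bounded (\<lambda>n. nd_size (D n)) \<longrightarrow>
       (\<forall>p :: nat poly. p \<noteq> 0 \<longrightarrow>
         (\<exists>N. \<forall>n\<ge>N. prob (n + 1) (\<lambda>y. nd_accepts (D n) y)
                      - prob n (\<lambda>x. nd_accepts (D n) (g x)) < 1 / real (poly p n))))"

end

theory Submission
  imports Defs
begin

lemma eval_wires_append: "eval_wires ws (gs @ hs) = eval_wires (eval_wires ws gs) hs"
  by (induction gs arbitrary: ws) auto

lemma eval_wires_prefix: "\<exists>v. eval_wires ws gs = ws @ v \<and> length v = length gs"
proof (induction gs arbitrary: ws)
  case Nil then show ?case by simp
next
  case (Cons g gs)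
  from Cons[of "ws @ [gate_val ws g]"] show ?case by fastforce
qed

definition relab :: "nat \<Rightarrow> nat \<Rightarrow> nat \<Rightarrow> nat \<Rightarrow> nat \<Rightarrow> nat" where
  "relab n K N z j = (if j < n then j else if j < N then j + K else z)"

fun map_gate :: "(nat \<Rightarrow> nat) \<Rightarrow> gate \<Rightarrow> gate" where
  "map_gate r (GConst c) = GConst c"
| "map_gate r (GNot i) = GNot (r i)"
| "map_gate r (GAnd i j) = GAnd (r i) (r j)"
| "map_gate r (GOr i j) = GOr (r i) (r j)"

lemma wire_relab:
  assumes "length x = n" "length mid = K" "z < n + K" "\<not> (x @ mid) ! z" "n + length u \<le> N"
  shows "wire (x @ mid @ u) (relab n K N z j) = wire (x @ u) j"
  using assms by (auto simp: wire_def relab_def nth_append)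

lemma gate_relab:
  assumes "length x = n" "length mid = K" "z < n + K" "\<not> (x @ mid) ! z" "n + length u \<le> N"
  shows "gate_val (x @ mid @ u) (map_gate (relab n K N z) g) = gate_val (x @ u) g"
  using wire_relab[OF assms] by (cases g) auto

lemma eval_relab:
  assumes "length x = n" "length mid = K" "z < n + K" "\<not> (x @ mid) ! z"
    "n + length u + length gs \<le> N"
  shows "eval_wires (x @ mid @ u) (map (map_gate (relab n K N z)) gs)
           = x @ mid @ drop n (eval_wires (x @ u) gs)"
  using assms(5)
proof (induction gs arbitrary: u)
  case Nil then show ?case using assms by simp
next
  case (Cons g gs)
  have g: "gate_val (x @ mid @ u) (map_gate (relab n K N z) g) = gate_val (x @ u) g"
    using gate_relab[OF assms(1-4)] Cons.prems by simp
  have "eval_wires (x @ mid @ u) (map (map_gate (relab n K N z)) (g # gs))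
      = eval_wires (x @ mid @ (u @ [gate_val (x @ u) g])) (map (map_gate (relab n K N z)) gs)"
    using g by simp
  also have "\<dots> = x @ mid @ drop n (eval_wires (x @ (u @ [gate_val (x @ u) g])) gs)"
    using Cons.IH[of "u @ [gate_val (x @ u) g]"] Cons.prems by simp
  finally show ?case by simp
qed

definition comp_circ :: "nat \<Rightarrow> circuit \<Rightarrow> circuit \<Rightarrow> circuit" where
  "comp_circ n Cf Cb = (let z = n + length (fst Cf);
      r = relab n (length (fst Cf) + 1) (n + length (fst Cb)) z in
     (fst Cf @ [GConst False] @ map (map_gate r) (fst Cb),
      map (\<lambda>q. if q < z then q else z) (snd Cf) @ map r (snd Cb)))"

lemma comp_circ_size: "circ_size (comp_circ n Cf Cb) = circ_size Cf + circ_size Cb + 1"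
  by (simp add: comp_circ_def circ_size_def Let_def)

lemma comp_circ_eval:
  assumes "length x = n"
  shows "circ_eval (comp_circ n Cf Cb) x = circ_eval Cf x @ circ_eval Cb x"
proof -
  obtain vf where vf: "eval_wires x (fst Cf) = x @ vf" "length vf = length (fst Cf)"
    using eval_wires_prefix by blast
  obtain vb where vb: "eval_wires x (fst Cb) = x @ vb" "length vb = length (fst Cb)"
    using eval_wires_prefix by blast
  define z where "z = n + length (fst Cf)"
  define r where "r = relab n (length (fst Cf) + 1) (n + length (fst Cb)) z"
  have z: "z < n + length (vf @ [False])" "\<not> (x @ vf @ [False]) ! z"
    using assms vf by (auto simp: z_def nth_append)
  have E: "eval_wires x (fst (comp_circ n Cf Cb)) = x @ (vf @ [False]) @ vb"
  proof -
    have "eval_wires x (fst (comp_circ n Cf Cb))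
        = eval_wires (x @ (vf @ [False]) @ []) (map (map_gate r) (fst Cb))"
      by (simp add: comp_circ_def Let_def z_def r_def eval_wires_append vf)
    also have "\<dots> = x @ (vf @ [False]) @ drop n (eval_wires (x @ []) (fst Cb))"
      unfolding r_def
      using eval_relab[OF assms, where mid="vf @ [False]" and K="length (fst Cf) + 1" and z=z
          and u="[]" and gs="fst Cb" and N="n + length (fst Cb)"] z vf by simp
    finally show ?thesis using vb assms by simp
  qed
  have W1: "wire (x @ (vf @ [False]) @ vb) (if q < z then q else z) = wire (x @ vf) q" for q
    using assms vf by (auto simp: wire_def nth_append z_def)
  have W2: "wire (x @ (vf @ [False]) @ vb) (r j) = wire (x @ vb) j" for j
    unfolding r_def
    using wire_relab[OF assms, where mid="vf @ [False]" and K="length (fst Cf) + 1" and z=z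
          and u=vb and N="n + length (fst Cb)"] z vf vb by simp
  show ?thesis
    unfolding circ_eval_def E
    using W1 W2 by (simp add: comp_circ_def Let_def vf vb z_def[symmetric] r_def[symmetric, simplified])
qed

definition dval_idx :: "nat \<Rightarrow> circuit \<Rightarrow> nat" where
  "dval_idx L C = (case snd C of [q] \<Rightarrow> if q < L then q else L | _ \<Rightarrow> L)"

lemma out1_dval:
  assumes "eval_wires z (fst C) = z @ v" "length v = length (fst C)"
  shows "out1 C z = wire (z @ v @ [False]) (dval_idx (length z + length (fst C)) C)"
  using assms
  by (cases "snd C" rule: remdups_adj.cases)
     (auto simp: out1_def circ_eval_def dval_idx_def wire_def nth_append)

lemma dval_idx_le: "dval_idx L C \<le> L"
  by (cases "snd C" rule: remdups_adj.cases) (auto simp: dval_idx_def)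

definition A1c :: "nat \<Rightarrow> nat \<Rightarrow> circuit \<Rightarrow> circuit" where
  "A1c n k C = (let L = n + 1 + k + length (fst C) in
     (fst C @ [GConst False, GNot n, GAnd (dval_idx L C) (L + 1)], [L + 2]))"

definition A2c :: "nat \<Rightarrow> nat \<Rightarrow> circuit \<Rightarrow> circuit" where
  "A2c n k C = (let L = n + 1 + k + length (fst C) in
     (fst C @ [GConst False, GAnd n (dval_idx L C), GNot (L + 1)], [L + 2]))"

lemma A1c_eval:
  assumes "length y = n" "length w = k"
  shows "out1 (A1c n k C) (y @ c # w) = (\<not> c \<and> out1 C (y @ c # w))"
proof -
  define z where "z = y @ c # w"
  obtain v where v: "eval_wires z (fst C) = z @ v" "length v = length (fst C)"
    using eval_wires_prefix by blast
  define L where "L = n + 1 + k + length (fst C)"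
  have lz: "length z = n + 1 + k" using assms by (simp add: z_def)
  have o: "out1 C z = wire (z @ v @ [False]) (dval_idx L C)"
    using out1_dval[OF v] lz by (simp add: L_def)
  have le: "dval_idx L C \<le> L" by (rule dval_idx_le)
  have zn: "(z @ v) ! n = c" using assms by (simp add: z_def nth_append)
  have w1: "wire (z @ v @ [False, \<not> c]) (dval_idx L C) = wire (z @ v @ [False]) (dval_idx L C)"
    using le lz v by (auto simp: wire_def nth_append L_def)
  define d where "d = wire (z @ v @ [False]) (dval_idx L C)"
  have wn: "wire (z @ v @ [False]) n = c" using zn lz by (simp add: wire_def nth_append)
  have wL: "wire (z @ v @ [False, \<not> c]) (L + 1) = (\<not> c)"
    using lz v by (simp add: wire_def nth_append L_def)
  have A: "A1c n k C = (fst C @ [GConst False, GNot n, GAnd (dval_idx L C) (L + 1)], [L + 2])"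
    by (simp add: A1c_def L_def Let_def)
  have E: "eval_wires z (fst (A1c n k C)) = z @ v @ [False, \<not> c, d \<and> \<not> c]"
    unfolding A using v wn wL w1 by (simp add: eval_wires_append d_def)
  have "circ_eval (A1c n k C) z = [d \<and> \<not> c]"
    using E lz v unfolding circ_eval_def A by (simp add: wire_def nth_append L_def)
  then show ?thesis
    using o by (auto simp: out1_def z_def[symmetric] d_def)
qed

lemma A2c_eval:
  assumes "length y = n" "length w = k"
  shows "out1 (A2c n k C) (y @ c # w) = (\<not> (c \<and> out1 C (y @ c # w)))"
proof -
  define z where "z = y @ c # w"
  obtain v where v: "eval_wires z (fst C) = z @ v" "length v = length (fst C)"
    using eval_wires_prefix by blast
  define L where "L = n + 1 + k + length (fst C)"
  have lz: "length z = n + 1 + k" using assms by (simp add: z_def)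
  have o: "out1 C z = wire (z @ v @ [False]) (dval_idx L C)"
    using out1_dval[OF v] lz by (simp add: L_def)
  have zn: "(z @ v) ! n = c" using assms by (simp add: z_def nth_append)
  define d where "d = wire (z @ v @ [False]) (dval_idx L C)"
  have wn: "wire (z @ v @ [False]) n = c" using zn lz by (simp add: wire_def nth_append)
  have wL: "wire (z @ v @ [False, c \<and> d]) (L + 1) = (c \<and> d)"
    using lz v by (simp add: wire_def nth_append L_def)
  have A: "A2c n k C = (fst C @ [GConst False, GAnd n (dval_idx L C), GNot (L + 1)], [L + 2])"
    by (simp add: A2c_def L_def Let_def)
  have E: "eval_wires z (fst (A2c n k C)) = z @ v @ [False, c \<and> d, \<not> (c \<and> d)]"
    unfolding A using v wn wL by (simp add: eval_wires_append d_def)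
  have "circ_eval (A2c n k C) z = [\<not> (c \<and> d)]"
    using E lz v unfolding circ_eval_def A by (simp add: wire_def nth_append L_def)
  then show ?thesis
    using o by (auto simp: out1_def z_def[symmetric] d_def)
qed

lemma ex_len_Suc: "(\<exists>w'. length w' = Suc k \<and> P w') \<longleftrightarrow> (\<exists>c w. length w = k \<and> P (c # w))"
  by (auto simp: length_Suc_conv)

lemma A1_accepts:
  assumes "length y = n"
  shows "nd_accepts (A1c n (snd D) (fst D), Suc (snd D)) y = nd_accepts D (y @ [False])"
proof -
  have "(\<exists>w'. length w' = Suc (snd D) \<and> out1 (A1c n (snd D) (fst D)) (y @ w'))
     = (\<exists>c w. length w = snd D \<and> out1 (A1c n (snd D) (fst D)) (y @ c # w))" by (rule ex_len_Suc)
  also have "\<dots> = (\<exists>c w. length w = snd D \<and> \<not> c \<and> out1 (fst D) (y @ c # w))"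
    by (simp add: A1c_eval[OF assms] cong: conj_cong)
  also have "\<dots> = (\<exists>w. length w = snd D \<and> out1 (fst D) (y @ False # w))"
  proof
    assume "\<exists>c w. length w = snd D \<and> \<not> c \<and> out1 (fst D) (y @ c # w)"
    then obtain c w where "length w = snd D" "\<not> c" "out1 (fst D) (y @ c # w)" by blast
    then show "\<exists>w. length w = snd D \<and> out1 (fst D) (y @ False # w)" by (cases c) auto
  next
    assume "\<exists>w. length w = snd D \<and> out1 (fst D) (y @ False # w)"
    then show "\<exists>c w. length w = snd D \<and> \<not> c \<and> out1 (fst D) (y @ c # w)" by blast
  qed
  finally show ?thesis unfolding nd_accepts_def by simp
qed

lemma A2_accepts:
  assumes "length y = n"
  shows "cond_accepts (A2c n (snd D) (fst D), Suc (snd D)) y = (\<not> nd_accepts D (y @ [True]))"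
proof -
  have "(\<exists>w'. length w' = Suc (snd D) \<and> \<not> out1 (A2c n (snd D) (fst D)) (y @ w'))
     = (\<exists>c w. length w = snd D \<and> \<not> out1 (A2c n (snd D) (fst D)) (y @ c # w))" by (rule ex_len_Suc)
  also have "\<dots> = (\<exists>c w. length w = snd D \<and> c \<and> out1 (fst D) (y @ c # w))"
    by (simp add: A2c_eval[OF assms] cong: conj_cong)
  also have "\<dots> = (\<exists>w. length w = snd D \<and> out1 (fst D) (y @ True # w))"
  proof
    assume "\<exists>c w. length w = snd D \<and> c \<and> out1 (fst D) (y @ c # w)"
    then obtain c w where "length w = snd D" "c" "out1 (fst D) (y @ c # w)" by blast
    then show "\<exists>w. length w = snd D \<and> out1 (fst D) (y @ True # w)" by (cases c) auto
  next
    assume "\<exists>w. length w = snd D \<and> out1 (fst D) (y @ True # w)"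
    then show "\<exists>c w. length w = snd D \<and> c \<and> out1 (fst D) (y @ c # w)" by blast
  qed
  finally show ?thesis unfolding nd_accepts_def cond_accepts_def by simp
qed

lemma A1c_size: "circ_size (A1c n k C) \<le> circ_size C + 4"
  by (simp add: A1c_def Let_def circ_size_def)
lemma A2c_size: "circ_size (A2c n k C) \<le> circ_size C + 4"
  by (simp add: A2c_def Let_def circ_size_def)

lemma poly_bounded_le:
  assumes "poly_bounded t" "\<And>n. s n \<le> t n + c"
  shows "poly_bounded s"
proof -
  obtain q where q: "\<And>n. t n \<le> poly q n" using assms(1) unfolding poly_bounded_def by blast
  have "s n \<le> poly (q + [:c:]) n" for n using q[of n] assms(2)[of n] by simp
  then show ?thesis unfolding poly_bounded_def by blast
qed

lemma poly_bounded_add: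
  assumes "poly_bounded s" "poly_bounded t"
  shows "poly_bounded (\<lambda>n. s n + t n)"
proof -
  obtain q where q: "\<And>n. s n \<le> poly q n" using assms(1) unfolding poly_bounded_def by blast
  obtain r where r: "\<And>n. t n \<le> poly r n" using assms(2) unfolding poly_bounded_def by blast
  have "s n + t n \<le> poly (q + r) n" for n using q[of n] r[of n] by simp
  then show ?thesis unfolding poly_bounded_def by blast
qed

lemma fin_len: "finite {x :: bool list. length x = n \<and> P x}"
proof -
  have "finite {xs :: bool list. set xs \<subseteq> UNIV \<and> length xs = n}"
    by (rule finite_lists_length_eq) simp
  then show ?thesis by (rule rev_finite_subset) auto
qed

lemma prob_cong: "(\<And>x. length x = n \<Longrightarrow> P x = Q x) \<Longrightarrow> prob n P = prob n Q"
proof -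
  assume h: "\<And>x. length x = n \<Longrightarrow> P x = Q x"
  have "{x. length x = n \<and> P x} = {x. length x = n \<and> Q x}" using h by auto
  then show ?thesis unfolding prob_def by simp
qed

lemma prob_split: "prob n P = prob n (\<lambda>x. P x \<and> Q x) + prob n (\<lambda>x. P x \<and> \<not> Q x)"
proof -
  have "{x. length x = n \<and> P x} = {x. length x = n \<and> P x \<and> Q x} \<union> {x. length x = n \<and> P x \<and> \<not> Q x}"
    by auto
  then have "card {x. length x = n \<and> P x} = card {x. length x = n \<and> P x \<and> Q x} + card {x. length x = n \<and> P x \<and> \<not> Q x}"
    by (simp add: card_Un_disjoint fin_len disjoint_iff)
  then show ?thesis unfolding prob_def by (simp add: add_divide_distrib)
qed

lemma prob_True: "prob n (\<lambda>x. True) = 1"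
proof -
  have "card {xs :: bool list. set xs \<subseteq> UNIV \<and> length xs = n} = 2 ^ n"
    using card_lists_length_eq[of "UNIV :: bool set" n] by simp
  then show ?thesis unfolding prob_def by simp
qed

lemma prob_Suc:
  "prob (Suc n) P = (prob n (\<lambda>y. P (y @ [False])) + prob n (\<lambda>y. P (y @ [True]))) / 2"
proof -
  let ?A = "{y. length y = n \<and> P (y @ [False])}" and ?B = "{y. length y = n \<and> P (y @ [True])}"
  have eq: "{x. length x = Suc n \<and> P x} = (\<lambda>y. y @ [False]) ` ?A \<union> (\<lambda>y. y @ [True]) ` ?B"
  proof (intro equalityI subsetI)
    fix x assume x: "x \<in> {x. length x = Suc n \<and> P x}"
    obtain y c where xe: "x = y @ [c]" using x by (cases x rule: rev_exhaust) auto
    have ly: "length y = n" and py: "P (y @ [c])" using x xe by auto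
    show "x \<in> (\<lambda>y. y @ [False]) ` ?A \<union> (\<lambda>y. y @ [True]) ` ?B"
      using ly py unfolding xe by (cases c) auto
  qed auto
  have "card {x. length x = Suc n \<and> P x} = card ?A + card ?B"
    unfolding eq
    by (subst card_Un_disjoint) (auto simp: fin_len card_image inj_on_def)
  then show ?thesis unfolding prob_def by (simp add: add_divide_distrib)
qed

lemma key_ineq:
  fixes a0 a1 c0 c1 d t0 n0 n1 :: real
  assumes "t0 - (c0 + c1) \<ge> d"
    and "t0 = (a0 + a1) / 2"
    and "n0 + c0 + n1 + c1 = 1"
  shows "n0 + 1/2 * a0 \<ge> 1/2 + d/2 \<or> n1 + 1/2 * a1 \<ge> 1/2 + d/2"
proof -
  have "n0 + 1/2 * a0 + (n1 + 1/2 * a1) \<ge> 1 + d" using assms by (simp add: field_simps)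
  then show ?thesis by linarith
qed

theorem proposition6p2:
  fixes f :: "bool list \<Rightarrow> bool list" and b :: "bool list \<Rightarrow> bool"
  assumes "\<forall>x. length (f x) = length x"
    and "poly_computable f"
    and "super_core (\<lambda>n. n) f b"
  shows "super_bit (\<lambda>x. f x @ [b x])"
proof -
  have pcb: "poly_computable_pred b" and nsc:
    "\<not> (\<exists>(A1 :: nat \<Rightarrow> ndcircuit) (A2 :: nat \<Rightarrow> ndcircuit) (p :: nat poly).
          poly_bounded (\<lambda>n. nd_size (A1 n)) \<and> poly_bounded (\<lambda>n. nd_size (A2 n)) \<and> p \<noteq> 0 \<and>
          infinite {n.
            prob n (\<lambda>x. \<not> nd_accepts (A1 n) (f x) \<and> \<not> b x)
              + 1/2 * prob n (\<lambda>y. nd_accepts (A1 n) y) \<ge> 1/2 + 1 / real (poly p n)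
          \<or> prob n (\<lambda>x. cond_accepts (A2 n) (f x) \<and> b x)
              + 1/2 * prob n (\<lambda>y. \<not> cond_accepts (A2 n) y) \<ge> 1/2 + 1 / real (poly p n)})"
    using assms(3) unfolding super_core_def by auto
  obtain Cf where Cf: "poly_bounded (\<lambda>n. circ_size (Cf n))" "\<And>x. circ_eval (Cf (length x)) x = f x"
    using assms(2) unfolding poly_computable_def by blast
  obtain Cb where Cb: "poly_bounded (\<lambda>n. circ_size (Cb n))" "\<And>x. circ_eval (Cb (length x)) x = [b x]"
    using pcb unfolding poly_computable_pred_def poly_computable_def by blast
  have pcg: "poly_computable (\<lambda>x. f x @ [b x])"
    unfolding poly_computable_def
  proof (intro exI conjI allI)
    show "poly_bounded (\<lambda>n. circ_size (comp_circ n (Cf n) (Cb n)))"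
      by (rule poly_bounded_le[OF poly_bounded_add[OF Cf(1) Cb(1)], where c=1])
         (simp add: comp_circ_size)
    fix x :: "bool list"
    show "circ_eval (comp_circ (length x) (Cf (length x)) (Cb (length x))) x = f x @ [b x]"
      by (simp add: comp_circ_eval Cf(2) Cb(2))
  qed
  show ?thesis
    unfolding super_bit_def
  proof (intro conjI pcg allI impI; rule ccontr)
    fix D :: "nat \<Rightarrow> ndcircuit" and p :: "nat poly"
    assume pbD: "poly_bounded (\<lambda>n. nd_size (D n))" and p0: "p \<noteq> 0"
      and nex: "\<nexists>N. \<forall>n\<ge>N. prob (n + 1) (nd_accepts (D n))
                   - prob n (\<lambda>x. nd_accepts (D n) (f x @ [b x])) < 1 / real (poly p n)"
    define A1 where "A1 n = (A1c n (snd (D n)) (fst (D n)), Suc (snd (D n)))" for n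
    define A2 where "A2 n = (A2c n (snd (D n)) (fst (D n)), Suc (snd (D n)))" for n
    define p' where "p' = smult 2 p"
    have p'0: "p' \<noteq> 0" using p0 by (simp add: p'_def)
    have le1: "nd_size (A1 n) \<le> nd_size (D n) + 5" for n
      using A1c_size[of n "snd (D n)" "fst (D n)"] by (simp add: A1_def nd_size_def)
    have pb1: "poly_bounded (\<lambda>n. nd_size (A1 n))"
      by (rule poly_bounded_le[OF pbD le1])
    have le2: "nd_size (A2 n) \<le> nd_size (D n) + 5" for n
      using A2c_size[of n "snd (D n)" "fst (D n)"] by (simp add: A2_def nd_size_def)
    have pb2: "poly_bounded (\<lambda>n. nd_size (A2 n))"
      by (rule poly_bounded_le[OF pbD le2])
    define G where "G = {n. prob (n + 1) (nd_accepts (D n))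
                   - prob n (\<lambda>x. nd_accepts (D n) (f x @ [b x])) \<ge> 1 / real (poly p n)}"
    have infG: "infinite G"
      unfolding infinite_nat_iff_unbounded_le G_def using nex by (auto simp: not_less)
    have sub: "G \<subseteq> {n.
            prob n (\<lambda>x. \<not> nd_accepts (A1 n) (f x) \<and> \<not> b x)
              + 1/2 * prob n (\<lambda>y. nd_accepts (A1 n) y) \<ge> 1/2 + 1 / real (poly p' n)
          \<or> prob n (\<lambda>x. cond_accepts (A2 n) (f x) \<and> b x)
              + 1/2 * prob n (\<lambda>y. \<not> cond_accepts (A2 n) y) \<ge> 1/2 + 1 / real (poly p' n)}"
    proof
      fix n assume "n \<in> G"
      then have dG: "prob (n + 1) (nd_accepts (D n))
                   - prob n (\<lambda>x. nd_accepts (D n) (f x @ [b x])) \<ge> 1 / real (poly p n)"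
        by (simp add: G_def)
      define P0 where "P0 = (\<lambda>y. nd_accepts (D n) (y @ [False]))"
      define P1 where "P1 = (\<lambda>y. nd_accepts (D n) (y @ [True]))"
      have lf: "length x = n \<Longrightarrow> length (f x) = n" for x using assms(1) by simp
      have e1: "prob n (\<lambda>y. nd_accepts (A1 n) y) = prob n P0"
        by (rule prob_cong) (simp add: A1_def P0_def A1_accepts)
      have e1f: "prob n (\<lambda>x. \<not> nd_accepts (A1 n) (f x) \<and> \<not> b x) = prob n (\<lambda>x. \<not> P0 (f x) \<and> \<not> b x)"
        by (rule prob_cong) (simp add: A1_def P0_def A1_accepts lf)
      have e2: "prob n (\<lambda>y. \<not> cond_accepts (A2 n) y) = prob n P1"
        by (rule prob_cong) (simp add: A2_def P1_def A2_accepts)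
      have e2f: "prob n (\<lambda>x. cond_accepts (A2 n) (f x) \<and> b x) = prob n (\<lambda>x. \<not> P1 (f x) \<and> b x)"
        by (rule prob_cong) (simp add: A2_def P1_def A2_accepts lf)
      have t0: "prob (n + 1) (nd_accepts (D n)) = (prob n P0 + prob n P1) / 2"
        using prob_Suc[of n "nd_accepts (D n)"] by (simp add: P0_def P1_def)
      have g: "prob n (\<lambda>x. nd_accepts (D n) (f x @ [b x]))
          = prob n (\<lambda>x. P0 (f x) \<and> \<not> b x) + prob n (\<lambda>x. P1 (f x) \<and> b x)"
      proof -
        have "prob n (\<lambda>x. nd_accepts (D n) (f x @ [b x]))
          = prob n (\<lambda>x. nd_accepts (D n) (f x @ [b x]) \<and> b x) + prob n (\<lambda>x. nd_accepts (D n) (f x @ [b x]) \<and> \<not> b x)"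
          by (rule prob_split)
        also have "prob n (\<lambda>x. nd_accepts (D n) (f x @ [b x]) \<and> b x) = prob n (\<lambda>x. P1 (f x) \<and> b x)"
          by (rule prob_cong) (auto simp: P1_def)
        also have "prob n (\<lambda>x. nd_accepts (D n) (f x @ [b x]) \<and> \<not> b x) = prob n (\<lambda>x. P0 (f x) \<and> \<not> b x)"
          by (rule prob_cong) (auto simp: P0_def)
        finally show ?thesis by simp
      qed
      have tot: "prob n (\<lambda>x. \<not> P0 (f x) \<and> \<not> b x) + prob n (\<lambda>x. P0 (f x) \<and> \<not> b x)
          + prob n (\<lambda>x. \<not> P1 (f x) \<and> b x) + prob n (\<lambda>x. P1 (f x) \<and> b x) = 1"
      proof -
        have "1 = prob n (\<lambda>x. True \<and> b x) + prob n (\<lambda>x. True \<and> \<not> b x)"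
          using prob_split[of n "\<lambda>x. True" b] prob_True by simp
        also have "prob n (\<lambda>x. True \<and> b x) = prob n (\<lambda>x. b x \<and> P1 (f x)) + prob n (\<lambda>x. b x \<and> \<not> P1 (f x))"
          using prob_split[of n b "\<lambda>x. P1 (f x)"] by simp
        also have "prob n (\<lambda>x. True \<and> \<not> b x) = prob n (\<lambda>x. \<not> b x \<and> P0 (f x)) + prob n (\<lambda>x. \<not> b x \<and> \<not> P0 (f x))"
          using prob_split[of n "\<lambda>x. \<not> b x" "\<lambda>x. P0 (f x)"] by simp
        finally show ?thesis by (simp add: conj_commute add_ac)
      qed
      have k: "prob n (\<lambda>x. \<not> P0 (f x) \<and> \<not> b x) + 1/2 * prob n P0 \<ge> 1/2 + (1 / real (poly p n))/2
             \<or> prob n (\<lambda>x. \<not> P1 (f x) \<and> b x) + 1/2 * prob n P1 \<ge> 1/2 + (1 / real (poly p n))/2"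
        by (rule key_ineq[OF _ t0 tot]) (use dG g in simp)
      have pp: "(1 / real (poly p n))/2 = 1 / real (poly p' n)" by (simp add: p'_def)
      show "n \<in> {n.
            prob n (\<lambda>x. \<not> nd_accepts (A1 n) (f x) \<and> \<not> b x)
              + 1/2 * prob n (\<lambda>y. nd_accepts (A1 n) y) \<ge> 1/2 + 1 / real (poly p' n)
          \<or> prob n (\<lambda>x. cond_accepts (A2 n) (f x) \<and> b x)
              + 1/2 * prob n (\<lambda>y. \<not> cond_accepts (A2 n) y) \<ge> 1/2 + 1 / real (poly p' n)}"
        using k e1 e1f e2 e2f pp by simp
    qed
    have "infinite {n.
            prob n (\<lambda>x. \<not> nd_accepts (A1 n) (f x) \<and> \<not> b x)
              + 1/2 * prob n (\<lambda>y. nd_accepts (A1 n) y) \<ge> 1/2 + 1 / real (poly p' n)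
          \<or> prob n (\<lambda>x. cond_accepts (A2 n) (f x) \<and> b x)
              + 1/2 * prob n (\<lambda>y. \<not> cond_accepts (A2 n) y) \<ge> 1/2 + 1 / real (poly p' n)}"
      using infG sub finite_subset by blast
    then show False using nsc pb1 pb2 p'0 by blast
  qed
qed

end
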